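(* Let $\mathcal{H}$ be an $n$-dimensional (real or complex) Hilbert space, let $F=\{f_i\}_{i=1}^N$ be a tight frame for $\mathcal{H}$, and let $\{q_i\}_{i=1}^N$ be the weight number sequence associated with a probability sequence $\{p_i\}_{i=1}^N$. Then $S_F^{-1}F$ is the unique 1-erasure probabilistic optimal dual (POD) of $F$ if and only if $S_F^{-1}F$ is the unique 1-erasure PASOD-frame of $F$ (i.e. $\Delta_F^{(1)}=\{S_F^{-1}F\}$).
   Context: A finite sequence $F=\{f_i\}_{i=1}^N$ in $\mathcal{H}$ is a frame if there are $A,B>0$ with $A\|f\|^2\le\sum_{i=1}^N|\langle f,f_i\rangle|^2\le B\|f\|^2$ for all $f$; it is tight if one can take $A=B$. The frame operator is $S_Ff=\sum_{i=1}^N\langle f,f_i\rangle f_i$ and the canonical dual is $S_F^{-1}F=\{S_F^{-1}f_i\}_{i=1}^N$. A frame $G=\{g_i\}_{i=1}^N$ is a dual of $F$ if $f=\sum_i\langle f,f_i\rangle g_i=\sum_i\langle f,g_i\rangle f_i$ for all $f$. A probability sequence is $\{p_i\}_{i=1}^N$ with $0\le p_i\le1$, $\sum p_i=1$; weight numbers $q_i=\frac{\sum_{j} p_j}{\sum_{j} p_j-p_i}\cdot\frac{N-1}{n}$. For $\Lambda\subseteq\{1,\dots,N\}$ the error operator is $E_{\Lambda,(F,G)}f=\sum_{i\in\Lambda}q_i\langle f,f_i\rangle g_i$. Set $\mathcal{O}_P^{(1)}(F,G)=\max_{|\Lambda|=1}\|E_{\Lambda,(F,G)}\|$ and $\mathcal{A}_P^{(1)}(F,G)=\max_{|\Lambda|=1}\frac{\|E_{\Lambda,(F,G)}\|+\rho(E_{\Lambda,(F,G)})}{2}$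 ($\rho$ = spectral radius). A dual $G$ of $F$ is a 1-erasure POD of $F$ if it minimizes $\mathcal{O}_P^{(1)}(F,\cdot)$ over all duals of $F$, and a 1-erasure PASOD-frame if it minimizes $\mathcal{A}_P^{(1)}(F,\cdot)$ over all duals of $F$; $\Delta_F^{(1)}$ is the set of 1-erasure PASOD-frames of $F$. *)

theory Defs
  imports "HOL-Analysis.Analysis"
begin

text \<open>Scalars of the Hilbert space: real or complex. hconj is the complex conjugation
 (identity on the reals); to_cplx embeds the scalars into the complex numbers (used only
 to define the spectral radius via complex eigenvalues, i.e. via the complexification).\<close>

class hscalar = real_normed_field +
  fixes hconj :: "'a \<Rightarrow> 'a" and to_cplx :: "'a \<Rightarrow> complex"

instantiation real :: hscalar
begin
definition hconj_real :: "real \<Rightarrow> real" where "hconj_real x = x"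
definition to_cplx_real :: "real \<Rightarrow> complex" where "to_cplx_real x = complex_of_real x"
instance ..
end

instantiation complex :: hscalar
begin
definition hconj_complex :: "complex \<Rightarrow> complex" where "hconj_complex x = cnj x"
definition to_cplx_complex :: "complex \<Rightarrow> complex" where "to_cplx_complex x = x"
instance ..
end

text \<open>The n-dimensional Hilbert space is 'a^'n (n = CARD('n)), with inner product
 linear in the first argument; the library norm on 'a^'n is the induced Euclidean norm.\<close>

definition hip :: "'a::hscalar^'n \<Rightarrow> 'a^'n \<Rightarrow> 'a" where
  "hip x y = (\<Sum>i\<in>UNIV. x$i * hconj (y$i))"

definition is_frame :: "nat \<Rightarrow> (nat \<Rightarrow> 'a::hscalar^'n) \<Rightarrow> bool" where
  "is_frame N F \<longleftrightarrow> (\<exists>A B. A > 0 \<and> B > 0 \<and>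
     (\<forall>f. A * (norm f)^2 \<le> (\<Sum>i=1..N. (norm (hip f (F i)))^2) \<and>
          (\<Sum>i=1..N. (norm (hip f (F i)))^2) \<le> B * (norm f)^2))"

definition tight_frame :: "nat \<Rightarrow> (nat \<Rightarrow> 'a::hscalar^'n) \<Rightarrow> bool" where
  "tight_frame N F \<longleftrightarrow> (\<exists>A. A > 0 \<and>
     (\<forall>f. A * (norm f)^2 \<le> (\<Sum>i=1..N. (norm (hip f (F i)))^2) \<and>
          (\<Sum>i=1..N. (norm (hip f (F i)))^2) \<le> A * (norm f)^2))"

definition frame_op :: "nat \<Rightarrow> (nat \<Rightarrow> 'a::hscalar^'n) \<Rightarrow> 'a^'n \<Rightarrow> 'a^'n" where
  "frame_op N F f = (\<Sum>i=1..N. hip f (F i) *s F i)"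

definition canon_dual :: "nat \<Rightarrow> (nat \<Rightarrow> 'a::hscalar^'n) \<Rightarrow> nat \<Rightarrow> 'a^'n" where
  "canon_dual N F i = (THE g. frame_op N F g = F i)"

definition is_dual :: "nat \<Rightarrow> (nat \<Rightarrow> 'a::hscalar^'n) \<Rightarrow> (nat \<Rightarrow> 'a^'n) \<Rightarrow> bool" where
  "is_dual N F G \<longleftrightarrow> is_frame N G \<and>
     (\<forall>f. f = (\<Sum>i=1..N. hip f (F i) *s G i) \<and> f = (\<Sum>i=1..N. hip f (G i) *s F i))"

definition prob_seq :: "nat \<Rightarrow> (nat \<Rightarrow> real) \<Rightarrow> bool" where
  "prob_seq N p \<longleftrightarrow> (\<forall>i\<in>{1..N}. 0 \<le> p i \<and> p i \<le> 1) \<and> (\<Sum>i=1..N. p i) = 1"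

definition weight :: "nat \<Rightarrow> nat \<Rightarrow> (nat \<Rightarrow> real) \<Rightarrow> nat \<Rightarrow> real" where
  "weight N n p i = (\<Sum>j=1..N. p j) / ((\<Sum>j=1..N. p j) - p i) * ((real N - 1) / real n)"

definition err_op :: "nat \<Rightarrow> (nat \<Rightarrow> real) \<Rightarrow> (nat \<Rightarrow> 'a::hscalar^'n) \<Rightarrow> (nat \<Rightarrow> 'a^'n)
    \<Rightarrow> nat set \<Rightarrow> 'a^'n \<Rightarrow> 'a^'n" where
  "err_op N p F G \<Lambda> f =
     (\<Sum>i\<in>\<Lambda>. (of_real (weight N CARD('n) p i) * hip f (F i)) *s G i)"

definition op_norm :: "('a::hscalar^'n \<Rightarrow> 'a^'n) \<Rightarrow> real" where
  "op_norm T = Sup {norm (T f) | f. norm f \<le> 1}"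

definition cmat :: "('a::hscalar^'n \<Rightarrow> 'a^'n) \<Rightarrow> complex^'n^'n" where
  "cmat T = (\<chi> i j. to_cplx ((T (axis j 1)) $ i))"

definition spec_rad :: "('a::hscalar^'n \<Rightarrow> 'a^'n) \<Rightarrow> real" where
  "spec_rad T = Max {cmod \<mu> | \<mu>. \<exists>v::complex^'n. v \<noteq> 0 \<and> cmat T *v v = \<mu> *s v}"

definition OP1 :: "nat \<Rightarrow> (nat \<Rightarrow> real) \<Rightarrow> (nat \<Rightarrow> 'a::hscalar^'n) \<Rightarrow> (nat \<Rightarrow> 'a^'n) \<Rightarrow> real" where
  "OP1 N p F G = Max {op_norm (err_op N p F G \<Lambda>) | \<Lambda>. \<Lambda> \<subseteq> {1..N} \<and> card \<Lambda> = 1}"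

definition AP1 :: "nat \<Rightarrow> (nat \<Rightarrow> real) \<Rightarrow> (nat \<Rightarrow> 'a::hscalar^'n) \<Rightarrow> (nat \<Rightarrow> 'a^'n) \<Rightarrow> real" where
  "AP1 N p F G = Max {(op_norm (err_op N p F G \<Lambda>) + spec_rad (err_op N p F G \<Lambda>)) / 2
                      | \<Lambda>. \<Lambda> \<subseteq> {1..N} \<and> card \<Lambda> = 1}"

definition is_POD1 :: "nat \<Rightarrow> (nat \<Rightarrow> real) \<Rightarrow> (nat \<Rightarrow> 'a::hscalar^'n) \<Rightarrow> (nat \<Rightarrow> 'a^'n) \<Rightarrow> bool" where
  "is_POD1 N p F G \<longleftrightarrow> is_dual N F G \<and> (\<forall>G'. is_dual N F G' \<longrightarrow> OP1 N p F G \<le> OP1 N p F G')"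

definition is_PASOD1 :: "nat \<Rightarrow> (nat \<Rightarrow> real) \<Rightarrow> (nat \<Rightarrow> 'a::hscalar^'n) \<Rightarrow> (nat \<Rightarrow> 'a^'n) \<Rightarrow> bool" where
  "is_PASOD1 N p F G \<longleftrightarrow> is_dual N F G \<and> (\<forall>G'. is_dual N F G' \<longrightarrow> AP1 N p F G \<le> AP1 N p F G')"

end

theory Submission
  imports Defs
begin


class hs2 = hscalar + real_inner +
  assumes hconj_mult: "hconj (x * y) = hconj x * hconj y"
  and hconj_add: "hconj (x + y) = hconj x + hconj y"
  and hconj_scaleR: "hconj (r *\<^sub>R x) = r *\<^sub>R hconj x"
  and hconj_one: "hconj 1 = 1"
  and hconj_hconj: "hconj (hconj x) = x"
  and norm_hconj: "norm (hconj x) = norm x"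
  and mult_hconj: "x * hconj x = (norm x)^2 *\<^sub>R 1"
  and to_cplx_add: "to_cplx (x + y) = to_cplx x + to_cplx y"
  and to_cplx_mult: "to_cplx (x * y) = to_cplx x * to_cplx y"
  and to_cplx_hconj: "to_cplx (hconj x) = cnj (to_cplx x)"
  and to_cplx_scaleR: "to_cplx (r *\<^sub>R x) = r *\<^sub>R to_cplx x"
  and to_cplx_one: "to_cplx 1 = 1"
  and norm_to_cplx: "cmod (to_cplx x) = norm x"
  and inner_hs: "inner x y = Re (to_cplx (x * hconj y))"

instance real :: hs2
proof
  fix x y r :: real
  show "hconj (x * y) = hconj x * hconj y" by (simp add: hconj_real_def)
  show "hconj (x + y) = hconj x + hconj y" by (simp add: hconj_real_def)
  show "hconj (r *\<^sub>R x) = r *\<^sub>R hconj x" by (simp add: hconj_real_def)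
  show "hconj (1::real) = 1" by (simp add: hconj_real_def)
  show "hconj (hconj x) = x" by (simp add: hconj_real_def)
  show "norm (hconj x) = norm x" by (simp add: hconj_real_def)
  show "x * hconj x = (norm x)^2 *\<^sub>R 1" by (simp add: hconj_real_def power2_eq_square)
  show "to_cplx (x + y) = to_cplx x + to_cplx y" by (simp add: to_cplx_real_def)
  show "to_cplx (x * y) = to_cplx x * to_cplx y" by (simp add: to_cplx_real_def)
  show "to_cplx (hconj x) = cnj (to_cplx x)" by (simp add: to_cplx_real_def hconj_real_def)
  show "to_cplx (r *\<^sub>R x) = r *\<^sub>R to_cplx x" by (simp add: to_cplx_real_def scaleR_conv_of_real)
  show "to_cplx (1::real) = 1" by (simp add: to_cplx_real_def)
  show "cmod (to_cplx x) = norm x" by (simp add: to_cplx_real_def)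
  show "inner x y = Re (to_cplx (x * hconj y))" by (simp add: to_cplx_real_def hconj_real_def)
qed

instance complex :: hs2
proof
  fix x y :: complex and r :: real
  show "hconj (x * y) = hconj x * hconj y" by (simp add: hconj_complex_def)
  show "hconj (x + y) = hconj x + hconj y" by (simp add: hconj_complex_def)
  show "hconj (r *\<^sub>R x) = r *\<^sub>R hconj x" by (simp add: hconj_complex_def)
  show "hconj (1::complex) = 1" by (simp add: hconj_complex_def)
  show "hconj (hconj x) = x" by (simp add: hconj_complex_def)
  show "norm (hconj x) = norm x" by (simp add: hconj_complex_def)
  show "x * hconj x = (norm x)^2 *\<^sub>R 1" unfolding hconj_complex_def scaleR_conv_of_real using complex_norm_square[of x] by simp
  show "to_cplx (x + y) = to_cplx x + to_cplx y" by (simp add: to_cplx_complex_def)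
  show "to_cplx (x * y) = to_cplx x * to_cplx y" by (simp add: to_cplx_complex_def)
  show "to_cplx (hconj x) = cnj (to_cplx x)" by (simp add: to_cplx_complex_def hconj_complex_def)
  show "to_cplx (r *\<^sub>R x) = r *\<^sub>R to_cplx x" by (simp add: to_cplx_complex_def)
  show "to_cplx (1::complex) = 1" by (simp add: to_cplx_complex_def)
  show "cmod (to_cplx x) = norm x" by (simp add: to_cplx_complex_def)
  show "inner x y = Re (to_cplx (x * hconj y))" by (simp add: to_cplx_complex_def hconj_complex_def inner_complex_def)
qed



lemma hconj_zero[simp]: "hconj (0::'a::hs2) = 0"
  using hconj_add[of "0::'a" 0] by simp

lemma hconj_sum: "hconj (\<Sum>i\<in>I. f i :: 'a::hs2) = (\<Sum>i\<in>I. hconj (f i))"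
  by (induction I rule: infinite_finite_induct) (auto simp: hconj_add)

lemma to_cplx_zero[simp]: "to_cplx (0::'a::hs2) = 0"
  using to_cplx_add[of "0::'a" 0] by simp

lemma to_cplx_sum: "to_cplx (\<Sum>i\<in>I. f i :: 'a::hs2) = (\<Sum>i\<in>I. to_cplx (f i))"
  by (induction I rule: infinite_finite_induct) (auto simp: to_cplx_add)

lemma hconj_minus: "hconj (- x :: 'a::hs2) = - hconj x"
  using hconj_add[of x "-x"] by (simp add: eq_neg_iff_add_eq_0 add.commute)

lemma to_cplx_minus: "to_cplx (- x :: 'a::hs2) = - to_cplx x"
  using to_cplx_add[of x "-x"] by (simp add: eq_neg_iff_add_eq_0 add.commute)

lemma hconj_of_real: "hconj (of_real r :: 'a::hs2) = of_real r"
  by (simp add: of_real_def hconj_scaleR hconj_one)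

lemma to_cplx_of_real: "to_cplx (of_real r :: 'a::hs2) = complex_of_real r"
  by (simp add: of_real_def to_cplx_scaleR to_cplx_one)

lemma to_cplx_inj: "to_cplx (x::'a::hs2) = 0 \<longleftrightarrow> x = 0"
  by (metis norm_eq_zero norm_to_cplx to_cplx_zero)

lemma hip_add_left: "hip (x + y) z = hip x z + hip y z"
  by (simp add: hip_def sum.distrib distrib_right)

lemma hip_smult_left: "hip (c *s x) y = c * hip x y"
  by (simp add: hip_def sum_distrib_left mult.assoc)

lemma hip_scaleR_left: "hip (r *\<^sub>R x) (y::'a::hs2^'n) = r *\<^sub>R hip x y"
  by (simp add: hip_def scaleR_sum_right)

lemma hip_zero_left[simp]: "hip 0 y = 0"
  by (simp add: hip_def)

lemma hip_sum_left: "hip (\<Sum>i\<in>I. f i) y = (\<Sum>i\<in>I. hip (f i) y)"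
  by (induction I rule: infinite_finite_induct) (simp_all add: hip_add_left)

lemma hip_commute: "hip (y::'a::hs2^'n) x = hconj (hip x y)"
  by (simp add: hip_def hconj_sum hconj_mult hconj_hconj mult.commute)

lemma hip_hconj: "hconj (hip x y) = hip y (x::'a::hs2^'n)"
  by (metis hip_commute hconj_hconj)

lemma hip_smult_right: "hip (x::'a::hs2^'n) (c *s y) = hip x y * hconj c"
proof -
  have "hip x (c *s y) = hconj (hip (c *s y) x)" by (rule hip_commute)
  also have "\<dots> = hip x y * hconj c" by (simp add: hip_smult_left hconj_mult hip_hconj mult.commute)
  finally show ?thesis .
qed

lemma hip_scaleR_right: "hip (x::'a::hs2^'n) (r *\<^sub>R y) = r *\<^sub>R hip x y"
proof -
  have "hip x (r *\<^sub>R y) = hconj (hip (r *\<^sub>R y) x)" by (rule hip_commute)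
  also have "\<dots> = r *\<^sub>R hip x y" by (simp add: hip_scaleR_left hconj_scaleR hip_hconj)
  finally show ?thesis .
qed

lemma hip_add_right: "hip (x::'a::hs2^'n) (y + z) = hip x y + hip x z"
proof -
  have "hip x (y + z) = hconj (hip (y + z) x)" by (rule hip_commute)
  also have "\<dots> = hip x y + hip x z" by (simp add: hip_add_left hconj_add hip_hconj)
  finally show ?thesis .
qed

lemma hip_sum_right: "hip (x::'a::hs2^'n) (\<Sum>i\<in>I. f i) = (\<Sum>i\<in>I. hip x (f i))"
proof -
  have "hip x (\<Sum>i\<in>I. f i) = hconj (hip (\<Sum>i\<in>I. f i) x)" by (rule hip_commute)
  also have "\<dots> = (\<Sum>i\<in>I. hip x (f i))" by (simp add: hip_sum_left hconj_sum hip_hconj)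
  finally show ?thesis .
qed

lemma inner_hip: "inner x y = Re (to_cplx (hip x (y::'a::hs2^'n)))"
  by (simp add: inner_vec_def hip_def to_cplx_sum inner_hs)

lemma norm_sq_vec: "(norm (x::'a::real_normed_vector^'n))^2 = (\<Sum>i\<in>UNIV. (norm (x$i))^2)"
  by (simp add: norm_vec_def L2_set_def sum_nonneg)

lemma hip_self: "hip x (x::'a::hs2^'n) = (norm x)^2 *\<^sub>R 1"
  by (simp add: hip_def mult_hconj norm_sq_vec scaleR_sum_left)

lemma norm_smult: "norm (c *s (x::'a::real_normed_field^'n)) = norm c * norm x"
  by (simp add: norm_vec_def L2_set_right_distrib norm_mult)

lemma norm_hip_le: "norm (hip x y) \<le> norm x * norm (y::'a::hs2^'n)"
proof -
  have "norm (hip x y) \<le> (\<Sum>i\<in>UNIV. norm (x$i * hconj (y$i)))"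
    unfolding hip_def by (rule norm_sum)
  also have "\<dots> = (\<Sum>i\<in>UNIV. \<bar>norm (x$i)\<bar> * \<bar>norm (y$i)\<bar>)"
    by (simp add: norm_mult norm_hconj)
  also have "\<dots> \<le> norm x * norm y"
    unfolding norm_vec_def by (rule L2_set_mult_ineq)
  finally show ?thesis .
qed

lemma hip_axis: "hip (axis j 1) (u::'a::hs2^'n) = hconj (u$j)"
proof -
  have "hip (axis j 1) u = (\<Sum>i\<in>UNIV. (if i = j then hconj (u$j) else 0))"
    unfolding hip_def by (rule sum.cong) (auto simp: axis_def)
  then show ?thesis by simp
qed

lemma norm_hip_self: "norm (hip x (x::'a::hs2^'n)) = (norm x)^2"
  by (simp add: hip_self)

lemma scaleR_smult_l: "(r *\<^sub>R c) *s (x::'a::real_algebra^'n) = r *\<^sub>R (c *s x)"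
  by (simp add: vec_eq_iff)

lemma scaleR_smult_r: "c *s (r *\<^sub>R (x::'a::real_algebra^'n)) = r *\<^sub>R (c *s x)"
  by (simp add: vec_eq_iff mult_scaleR_right)



lemma op_norm_rank1:
  fixes u g :: "'a::hs2^'n"
  shows "op_norm (\<lambda>f. (of_real q * hip f u) *s g) = \<bar>q\<bar> * norm u * norm g"
proof -
  let ?X = "{norm ((of_real q * hip f u) *s g) | f. norm f \<le> 1}"
  have nf: "norm ((of_real q * hip f u) *s g) = \<bar>q\<bar> * norm (hip f u) * norm g" for f
    by (simp add: norm_smult norm_mult)
  have ub: "x \<le> \<bar>q\<bar> * norm u * norm g" if "x \<in> ?X" for x
  proof -
    from that obtain f where x: "x = norm ((of_real q * hip f u) *s g)" and f: "norm f \<le> 1" by auto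
    have "norm (hip f u) \<le> norm f * norm u" by (rule norm_hip_le)
    also have "\<dots> \<le> norm u" using f by (simp add: mult_left_le_one_le)
    finally have "norm (hip f u) \<le> norm u" .
    then show ?thesis unfolding x nf
      by (intro mult_right_mono mult_left_mono) auto
  qed
  have mem: "\<bar>q\<bar> * norm u * norm g \<in> ?X"
  proof (cases "u = 0")
    case True
    then show ?thesis by (auto intro!: exI[of _ 0] simp: nf hip_def)
  next
    case False
    let ?f = "(1 / norm u) *\<^sub>R u"
    have "norm ?f \<le> 1" using False by simp
    moreover have "norm (hip ?f u) = norm u"
      using False by (simp add: hip_scaleR_left norm_hip_self power2_eq_square)
    ultimately show ?thesis unfolding nf by (intro CollectI exI[of _ ?f]) (auto simp: nf)
  qed
  show ?thesis unfolding op_norm_def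
    by (rule cSup_eq_maximum[OF mem]) (use ub in blast)
qed

lemma spec_rad_rank1:
  fixes u g :: "'a::hs2^'n"
  shows "spec_rad (\<lambda>f. (of_real q * hip f u) *s g) = \<bar>q\<bar> * norm (hip g u)"
proof -
  let ?T = "\<lambda>f. (of_real q * hip f u) *s g"
  define Gc :: "complex^'n" where "Gc = (\<chi> i. to_cplx (g$i))"
  define U :: "complex^'n" where "U = (\<chi> i. to_cplx (u$i))"
  define cc where "cc = (\<lambda>v::complex^'n. complex_of_real q * (\<Sum>j\<in>UNIV. cnj (U$j) * v$j))"
  have cm: "cmat ?T *v v = cc v *s Gc" for v
    by (simp add: cmat_def matrix_vector_mult_def vec_eq_iff hip_axis to_cplx_mult to_cplx_of_real
        to_cplx_hconj Gc_def U_def cc_def sum_distrib_left mult_ac)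
  define l where "l = cc Gc"
  have l_eq: "l = complex_of_real q * to_cplx (hip g u)"
    by (simp add: l_def cc_def hip_def to_cplx_sum to_cplx_mult to_cplx_hconj Gc_def U_def mult_ac)
  have cl: "cmod l = \<bar>q\<bar> * norm (hip g u)"
    by (simp add: l_eq norm_mult norm_to_cplx)
  let ?S = "{cmod \<mu> | \<mu>. \<exists>v::complex^'n. v \<noteq> 0 \<and> cmat ?T *v v = \<mu> *s v}"
  have sub: "?S \<subseteq> {0, cmod l}"
  proof
    fix x assume "x \<in> ?S"
    then obtain \<mu> v where x: "x = cmod \<mu>" and v: "v \<noteq> 0" and ev: "cc v *s Gc = \<mu> *s v"
      by (auto simp: cm)
    show "x \<in> {0, cmod l}"
    proof (cases "\<mu> = 0")
      case True then show ?thesis by (simp add: x)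
    next
      case False
      have vv: "v = (cc v / \<mu>) *s Gc"
        using ev False by (simp add: vec_eq_iff field_simps)
      have c0: "cc v \<noteq> 0" using vv v by auto
      have lin: "cc (a *s Gc) = a * l" for a
        by (simp add: l_def cc_def sum_distrib_left mult_ac)
      have "cc v = (cc v / \<mu>) * l"
        using lin[of "cc v / \<mu>"] vv by metis
      then have "\<mu> = l" using c0 False by (simp add: field_simps)
      then show ?thesis by (simp add: x)
    qed
  qed
  have mem: "cmod l \<in> ?S"
  proof (cases "Gc = 0")
    case False
    have "cmat ?T *v Gc = l *s Gc" by (simp add: cm l_def)
    then show ?thesis using False by blast
  next
    case True
    have l0: "l = 0" by (simp add: l_def cc_def True)
    have "cmat ?T *v axis undefined 1 = 0 *s axis undefined 1" by (simp add: cm True)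
    moreover have "axis undefined (1::complex) \<noteq> (0::complex^'n)" by (simp add: axis_eq_0_iff)
    ultimately have "\<exists>v::complex^'n. v \<noteq> 0 \<and> cmat ?T *v v = l *s v" using l0 by metis
    then show ?thesis by blast
  qed
  have fin: "finite ?S" using sub by (rule finite_subset) simp
  have le: "y \<le> cmod l" if "y \<in> ?S" for y
  proof -
    have "y \<in> {0, cmod l}" using sub that by blast
    then show ?thesis by auto
  qed
  have "Max ?S = cmod l"
    by (rule Max_eqI[OF fin le mem])
  then show ?thesis unfolding spec_rad_def cl .
qed



lemma norm_axis_one[simp]: "norm (axis j (1::'a::real_normed_field) :: 'a^'n) = 1"
proof -
  have "(norm (axis j (1::'a) :: 'a^'n))^2 = (\<Sum>i\<in>UNIV. if i = j then 1 else 0)"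
    unfolding norm_sq_vec by (rule sum.cong) (auto simp: axis_def)
  then have "(norm (axis j (1::'a) :: 'a^'n))^2 = 1" by simp
  then show ?thesis using norm_ge_zero[of "axis j (1::'a) :: 'a^'n"] by (simp add: power2_eq_1_iff)
qed

lemma Re_mult_cnj: "Re (z * cnj z) = (cmod z)^2"
  by (metis complex_norm_square Re_complex_of_real)

lemma sq_sum_le: 
  fixes F :: "nat \<Rightarrow> 'a::hs2^'n"
  assumes "\<forall>f. f = (\<Sum>i=1..N. hip f (G i) *s F i)"
  shows "(norm f)^2 \<le> (\<Sum>i=1..N. (norm (hip f (G i)))^2) * (\<Sum>i=1..N. (norm (F i))^2)"
proof -
  have "norm f = norm (\<Sum>i=1..N. hip f (G i) *s F i)" using assms by metis
  also have "\<dots> \<le> (\<Sum>i=1..N. norm (hip f (G i) *s F i))" by (rule norm_sum)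
  also have "\<dots> = (\<Sum>i=1..N. \<bar>norm (hip f (G i))\<bar> * \<bar>norm (F i)\<bar>)" by (simp add: norm_smult)
  also have "\<dots> \<le> L2_set (\<lambda>i. norm (hip f (G i))) {1..N} * L2_set (\<lambda>i. norm (F i)) {1..N}"
    by (rule L2_set_mult_ineq)
  finally have "(norm f)^2 \<le> (L2_set (\<lambda>i. norm (hip f (G i))) {1..N} * L2_set (\<lambda>i. norm (F i)) {1..N})^2"
    by (simp add: power_mono)
  also have "\<dots> = (\<Sum>i=1..N. (norm (hip f (G i)))^2) * (\<Sum>i=1..N. (norm (F i))^2)"
    by (simp add: power_mult_distrib L2_set_def sum_nonneg)
  finally show ?thesis .
qed

lemma frame_of_recon:
  fixes F G :: "nat \<Rightarrow> 'a::hs2^'n"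
  assumes rec: "\<forall>f. f = (\<Sum>i=1..N. hip f (G i) *s F i)"
  shows "is_frame N G"
proof -
  define C where "C = (\<Sum>i=1..N. (norm (F i))^2)"
  define D where "D = (\<Sum>i=1..N. (norm (G i))^2) + 1"
  have C0: "C \<ge> 0" unfolding C_def by (simp add: sum_nonneg)
  have key: "(norm f)^2 \<le> (\<Sum>i=1..N. (norm (hip f (G i)))^2) * C" for f
    unfolding C_def by (rule sq_sum_le[OF rec])
  have Cpos: "C > 0"
  proof (rule ccontr)
    assume "\<not> C > 0"
    then have "C = 0" using C0 by simp
    then have "(norm (axis undefined 1 :: 'a^'n))^2 \<le> 0" using key[of "axis undefined 1"] by simp
    then show False by simp
  qed
  have lo: "(1/C) * (norm f)^2 \<le> (\<Sum>i=1..N. (norm (hip f (G i)))^2)" for f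
    using key[of f] Cpos by (simp add: field_simps)
  have "(\<Sum>i=1..N. (norm (hip f (G i)))^2) \<le> (\<Sum>i=1..N. (norm f * norm (G i))^2)" for f
    by (intro sum_mono power_mono norm_hip_le) auto
  also have "(\<Sum>i=1..N. (norm f * norm (G i))^2) = (D - 1) * (norm f)^2" for f
    by (simp add: D_def power_mult_distrib sum_distrib_left mult.commute)
  also have "(D - 1) * (norm f)^2 \<le> D * (norm f)^2" for f by (simp add: algebra_simps)
  finally have up: "(\<Sum>i=1..N. (norm (hip f (G i)))^2) \<le> D * (norm f)^2" for f .
  have "D > 0" unfolding D_def by (simp add: add_nonneg_pos sum_nonneg)
  then show ?thesis unfolding is_frame_def using lo up Cpos
    by (intro exI[of _ "1/C"] exI[of _ D]) auto
qed

lemma tight_frame_op: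
  fixes F :: "nat \<Rightarrow> 'a::hs2^'n"
  assumes "tight_frame N F"
  obtains A where "A > 0" "N \<ge> 1" "\<And>f. frame_op N F f = A *\<^sub>R f"
proof -
  obtain A where A0: "A > 0" and tf: "\<And>f. (\<Sum>i=1..N. (norm (hip f (F i)))^2) = A * (norm f)^2"
    using assms unfolding tight_frame_def by (metis order_antisym)
  define Bf where "Bf = (\<lambda>x y. \<Sum>i=1..N. Re (to_cplx (hip x (F i)) * cnj (to_cplx (hip y (F i)))))"
  have inS: "inner x (frame_op N F y) = Bf x y" for x y
    by (simp add: frame_op_def Bf_def inner_hip hip_sum_right hip_smult_right to_cplx_sum to_cplx_mult
        to_cplx_hconj Re_sum)
  have sym: "Bf x y = Bf y x" for x y
    unfolding Bf_def by (intro sum.cong) (auto simp: mult.commute)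
  have addl: "Bf (x + y) z = Bf x z + Bf y z" for x y z
    unfolding Bf_def by (simp add: hip_add_left to_cplx_add distrib_right sum.distrib)
  have diag: "Bf x x = A * (norm x)^2" for x
  proof -
    have "Bf x x = (\<Sum>i=1..N. (norm (hip x (F i)))^2)"
      unfolding Bf_def by (intro sum.cong) (auto simp only: Re_mult_cnj norm_to_cplx)
    then show ?thesis using tf by simp
  qed
  have pol: "Bf x y = A * inner x y" for x y
  proof -
    have "Bf (x+y) (x+y) = Bf x x + 2 * Bf x y + Bf y y"
      using addl sym by (simp add: addl)
    moreover have "(norm (x + y))^2 = (norm x)^2 + 2 * inner x y + (norm y)^2"
      by (simp add: power2_norm_eq_inner inner_add_left inner_add_right inner_commute)
    ultimately show ?thesis using diag[of "x+y"] diag[of x] diag[of y] by (simp add: algebra_simps)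
  qed
  have "frame_op N F f = A *\<^sub>R f" for f
  proof -
    have "inner x (frame_op N F f - A *\<^sub>R f) = 0" for x
      by (simp add: inner_diff_right inS pol)
    from this[of "frame_op N F f - A *\<^sub>R f"] show ?thesis by simp
  qed
  moreover have "N \<ge> 1"
  proof (rule ccontr)
    assume "\<not> N \<ge> 1"
    then have "N = 0" by simp
    then have "A * (norm (axis undefined 1 :: 'a^'n))^2 = 0" using tf[of "axis undefined 1"] by simp
    then show False using A0 by simp
  qed
  ultimately show ?thesis using that A0 by blast
qed



lemma RL:
  fixes w a x P R M K :: real
  assumes w0: "w \<ge> 0" and a0: "a \<ge> 0" and wa: "w * a \<le> M" and ap: "w * (P + R) / 2 \<le> M"
    and xR: "x \<le> R" and RP: "R \<le> P" and R0: "R \<ge> 0" and K: "K = P^2 - 2*a*x + a^2"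
  shows "\<exists>t0>0. \<forall>t. 0 < t \<and> t \<le> t0 \<longrightarrow> w^2 * (a^2 + 2*t*a*(x-a) + t^2*K) \<le> M^2"
proof -
  have "a * x \<le> a * P" using a0 xR RP by (intro mult_left_mono) auto
  moreover have "(P - a)^2 = P^2 - 2*a*P + a^2" by (simp add: power2_diff algebra_simps)
  moreover have "(P - a)^2 \<ge> 0" by simp
  ultimately have K0: "K \<ge> 0" unfolding K by linarith
  have M0: "M \<ge> 0" using wa w0 a0 by (smt (verit) mult_nonneg_nonneg)
  show ?thesis
  proof (cases "w * a < M")
    case True
    define D where "D = w^2 * (2*a*\<bar>x-a\<bar> + K) + 1"
    have D0: "D > 0" unfolding D_def using K0 a0 by (simp add: add_nonneg_pos)
    have E0: "M^2 - (w*a)^2 > 0"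
      using True w0 a0 by (smt (verit) mult_nonneg_nonneg power_strict_mono zero_less_numeral)
    define t0 where "t0 = min 1 ((M^2 - (w*a)^2) / D)"
    have t00: "t0 > 0" unfolding t0_def using D0 E0 by simp
    have "w^2 * (a^2 + 2*t*a*(x-a) + t^2*K) \<le> M^2" if t: "0 < t" "t \<le> t0" for t
    proof -
      have t1: "t \<le> 1" using t unfolding t0_def by simp
      have "t^2 * K \<le> t * K" using t t1 K0 by (simp add: power2_eq_square mult_right_le_one_le mult_right_mono)
      moreover have "2*t*a*(x-a) \<le> t * (2*a*\<bar>x-a\<bar>)" using t a0
        by (simp add: mult_left_mono mult.assoc)
      ultimately have "a^2 + 2*t*a*(x-a) + t^2*K \<le> a^2 + t * (2*a*\<bar>x-a\<bar> + K)"
        by (simp add: algebra_simps)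
      then have "w^2 * (a^2 + 2*t*a*(x-a) + t^2*K) \<le> w^2 * (a^2 + t * (2*a*\<bar>x-a\<bar> + K))"
        by (simp add: mult_left_mono)
      also have "\<dots> = (w*a)^2 + t * (w^2 * (2*a*\<bar>x-a\<bar> + K))" by (simp add: algebra_simps power_mult_distrib)
      also have "\<dots> \<le> (w*a)^2 + t * D" unfolding D_def using t by (simp add: mult_left_mono)
      also have "t * D \<le> (M^2 - (w*a)^2) / D * D"
        using t D0 unfolding t0_def by (intro mult_right_mono) auto
      then have "(w*a)^2 + t * D \<le> M^2" using D0 by simp
      finally show ?thesis .
    qed
    then show ?thesis using t00 by blast
  next
    case False
    then have waM: "w * a = M" using wa by simp
    show ?thesis
    proof (cases "w = 0")
      case True
      then show ?thesis using M0 by (intro exI[of _ 1]) auto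
    next
      case False
      then have w1: "w > 0" using w0 by simp
      have "w * (P + R) \<le> w * (2 * a)" using ap waM by simp
      then have PR: "P + R \<le> 2 * a" using w1 by simp
      show ?thesis
      proof (cases "a = 0")
        case True
        then have "P = 0" using PR RP R0 by simp
        then have "K = 0" using K True by simp
        then show ?thesis using True M0 by (intro exI[of _ 1]) auto
      next
        case False
        then have a1: "a > 0" using a0 by simp
        show ?thesis
        proof (cases "x < a")
          case True
          define t0 where "t0 = min 1 (2*a*(a-x)/(K+1))"
          have t00: "t0 > 0" unfolding t0_def using a1 True K0 by simp
          have "w^2 * (a^2 + 2*t*a*(x-a) + t^2*K) \<le> M^2" if t: "0 < t" "t \<le> t0" for t
          proof -
            have "t * K \<le> 2*a*(a-x)/(K+1) * K"
              using t K0 unfolding t0_def by (intro mult_right_mono) auto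
            also have "\<dots> \<le> 2*a*(a-x)"
              using K0 a1 True by (simp add: divide_le_eq field_simps mult_left_mono)
            finally have "t * (t * K) \<le> t * (2*a*(a-x))" using t by (simp add: mult_left_mono)
            then have "a^2 + 2*t*a*(x-a) + t^2*K \<le> a^2" by (simp add: algebra_simps power2_eq_square)
            then have "w^2 * (a^2 + 2*t*a*(x-a) + t^2*K) \<le> w^2 * a^2" by (simp add: mult_left_mono)
            moreover have "w^2 * a^2 = M^2" using waM by (metis power_mult_distrib)
            ultimately show ?thesis by simp
          qed
          then show ?thesis using t00 by blast
        next
          case False
          have "2 * x \<le> 2 * a" using xR RP PR by simp
          then have "x = a" using False by simp
          then have "P = a" using xR RP PR by simp
          then have "K = 0" using K \<open>x = a\<close> by (simp add: power2_eq_square)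
          then show ?thesis using waM \<open>x = a\<close>
            by (intro exI[of _ 1]) (auto simp: power_mult_distrib)
        qed
      qed
    qed
  qed
qed



lemma card1_img: "{h \<Lambda> | \<Lambda>. \<Lambda> \<subseteq> {1..N} \<and> card \<Lambda> = 1} = (\<lambda>i. h {i}) ` {1..(N::nat)}"
  by (auto simp: card_1_singleton_iff)

lemma err_op_single:
  fixes F G :: "nat \<Rightarrow> 'a::hs2^'n"
  shows "err_op N p F G {i} = (\<lambda>f. (of_real (weight N CARD('n) p i) * hip f (F i)) *s G i)"
  by (simp add: err_op_def fun_eq_iff)

lemma OP1_eq:
  fixes F G :: "nat \<Rightarrow> 'a::hs2^'n"
  shows "OP1 N p F G = Max ((\<lambda>i. \<bar>weight N CARD('n) p i\<bar> * norm (F i) * norm (G i)) ` {1..N})"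
  unfolding OP1_def card1_img err_op_single op_norm_rank1 ..

lemma AP1_eq:
  fixes F G :: "nat \<Rightarrow> 'a::hs2^'n"
  shows "AP1 N p F G = Max ((\<lambda>i. (\<bar>weight N CARD('n) p i\<bar> * norm (F i) * norm (G i)
      + \<bar>weight N CARD('n) p i\<bar> * norm (hip (G i) (F i))) / 2) ` {1..N})"
  unfolding AP1_def card1_img err_op_single op_norm_rank1 spec_rad_rank1 ..

lemma Max_img_mono:
  assumes "finite A" "A \<noteq> {}" "\<And>i. i \<in> A \<Longrightarrow> f i \<le> (g i :: real)"
  shows "Max (f ` A) \<le> Max (g ` A)"
proof -
  have "Max (f ` A) \<in> f ` A" using assms by simp
  then obtain i where i: "i \<in> A" "Max (f ` A) = f i" by auto
  have "g i \<le> Max (g ` A)" using assms i by simp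
  then show ?thesis using i assms(3)[of i] by simp
qed

lemma Max_img_le:
  assumes "finite A" "A \<noteq> {}" "\<And>i. i \<in> A \<Longrightarrow> f i \<le> (M :: real)"
  shows "Max (f ` A) \<le> M"
  using assms by (auto simp: Max_le_iff)

lemma Max_img_ge:
  assumes "finite A" "i \<in> A"
  shows "f i \<le> Max (f ` A :: real set)"
  using assms by (auto intro: Max_ge)

lemma norm_id:
  fixes u g :: "'a::real_inner"
  assumes A: "A > 0"
  shows "(norm u)^2 * (norm ((1-t) *\<^sub>R ((1/A) *\<^sub>R u) + t *\<^sub>R g))^2
       = ((norm u)^2/A)^2 + 2*t*((norm u)^2/A)*(inner g u - (norm u)^2/A)
         + t^2*((norm u * norm g)^2 - 2*((norm u)^2/A)*inner g u + ((norm u)^2/A)^2)"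
proof -
  have e: "(norm ((1-t) *\<^sub>R ((1/A) *\<^sub>R u) + t *\<^sub>R g))^2
      = ((1-t)/A)^2 * (norm u)^2 + 2*((1-t)/A)*t * inner g u + t^2 * (norm g)^2"
    unfolding power2_norm_eq_inner
    using A by (simp add: inner_add_left inner_add_right inner_commute power2_eq_square field_simps)
  show ?thesis unfolding e using A by (simp add: power2_eq_square field_simps)
qed

lemma recon_comb:
  fixes F G G' :: "nat \<Rightarrow> 'a::hs2^'n"
  assumes "\<forall>f. f = (\<Sum>i=1..N. hip f (F i) *s G i) \<and> f = (\<Sum>i=1..N. hip f (G i) *s F i)"
    and "\<forall>f. f = (\<Sum>i=1..N. hip f (F i) *s G' i) \<and> f = (\<Sum>i=1..N. hip f (G' i) *s F i)"
    and "r + s = 1"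
  shows "\<forall>f. f = (\<Sum>i=1..N. hip f (F i) *s (r *\<^sub>R G i + s *\<^sub>R G' i))
           \<and> f = (\<Sum>i=1..N. hip f (r *\<^sub>R G i + s *\<^sub>R G' i) *s F i)"
proof
  fix f
  have "(\<Sum>i=1..N. hip f (F i) *s (r *\<^sub>R G i + s *\<^sub>R G' i))
      = r *\<^sub>R (\<Sum>i=1..N. hip f (F i) *s G i) + s *\<^sub>R (\<Sum>i=1..N. hip f (F i) *s G' i)"
    by (simp add: vector_add_ldistrib scaleR_smult_r sum.distrib scaleR_sum_right)
  also have "\<dots> = r *\<^sub>R f + s *\<^sub>R f" using assms(1,2) by metis
  also have "\<dots> = f" using assms(3) by (metis scaleR_add_left scaleR_one)
  finally have 1: "f = (\<Sum>i=1..N. hip f (F i) *s (r *\<^sub>R G i + s *\<^sub>R G' i))" ..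
  have "(\<Sum>i=1..N. hip f (r *\<^sub>R G i + s *\<^sub>R G' i) *s F i)
      = r *\<^sub>R (\<Sum>i=1..N. hip f (G i) *s F i) + s *\<^sub>R (\<Sum>i=1..N. hip f (G' i) *s F i)"
    by (simp add: hip_add_right hip_scaleR_right vector_sadd_rdistrib scaleR_smult_l sum.distrib scaleR_sum_right)
  also have "\<dots> = r *\<^sub>R f + s *\<^sub>R f" using assms(1,2) by metis
  also have "\<dots> = f" using assms(3) by (metis scaleR_add_left scaleR_one)
  finally have 2: "f = (\<Sum>i=1..N. hip f (r *\<^sub>R G i + s *\<^sub>R G' i) *s F i)" ..
  show "f = (\<Sum>i=1..N. hip f (F i) *s (r *\<^sub>R G i + s *\<^sub>R G' i))
           \<and> f = (\<Sum>i=1..N. hip f (r *\<^sub>R G i + s *\<^sub>R G' i) *s F i)" using 1 2 by blast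
qed

lemma canon_facts:
  fixes F :: "nat \<Rightarrow> 'a::hs2^'n"
  assumes A: "A > 0" and S: "\<And>f. frame_op N F f = A *\<^sub>R f"
  shows "canon_dual N F i = (1/A) *\<^sub>R F i"
    and "is_dual N F (canon_dual N F)"
proof -
  show ce: "canon_dual N F i = (1/A) *\<^sub>R F i" for i
    unfolding canon_dual_def
  proof (rule the_equality)
    show "frame_op N F ((1/A) *\<^sub>R F i) = F i" using A by (simp add: S)
    fix g assume "frame_op N F g = F i"
    then have "A *\<^sub>R g = F i" by (simp add: S)
    then show "g = (1/A) *\<^sub>R F i" using A by (metis divide_inverse_commute scaleR_scaleR
          inverse_eq_divide less_irrefl right_inverse scaleR_one mult.commute)
  qed
  have r1: "f = (\<Sum>i=1..N. hip f (F i) *s canon_dual N F i)" for f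
  proof -
    have "(\<Sum>i=1..N. hip f (F i) *s canon_dual N F i) = (1/A) *\<^sub>R frame_op N F f"
      by (simp add: ce frame_op_def scaleR_smult_r scaleR_sum_right)
    then show ?thesis using A by (simp add: S)
  qed
  have r2: "f = (\<Sum>i=1..N. hip f (canon_dual N F i) *s F i)" for f
  proof -
    have "(\<Sum>i=1..N. hip f (canon_dual N F i) *s F i) = (1/A) *\<^sub>R frame_op N F f"
      by (simp add: ce frame_op_def hip_scaleR_right scaleR_smult_l scaleR_sum_right)
    then show ?thesis using A by (simp add: S)
  qed
  show "is_dual N F (canon_dual N F)"
    unfolding is_dual_def using r1 r2 frame_of_recon[where N=N and G="canon_dual N F" and F=F] by blast
qed



lemma main_generic:
  fixes F :: "nat \<Rightarrow> 'a::hs2^'n"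
  assumes tf: "tight_frame N F"
  shows "(is_POD1 N p F (canon_dual N F) \<and>
              (\<forall>G. is_POD1 N p F G \<longrightarrow> (\<forall>i\<in>{1..N}. G i = canon_dual N F i)))
             \<longleftrightarrow>
             (is_PASOD1 N p F (canon_dual N F) \<and>
              (\<forall>G. is_PASOD1 N p F G \<longrightarrow> (\<forall>i\<in>{1..N}. G i = canon_dual N F i)))"
proof -
  obtain A where A: "A > 0" and N1: "N \<ge> 1" and S: "\<And>f. frame_op N F f = A *\<^sub>R f"
    using tight_frame_op[OF tf] by blast
  define c where "c = canon_dual N F"
  have ce: "c i = (1/A) *\<^sub>R F i" for i unfolding c_def by (rule canon_facts(1)[OF A S])
  have cd: "is_dual N F c" unfolding c_def by (rule canon_facts(2)[OF A S])
  define w where "w i = \<bar>weight N CARD('n) p i\<bar>" for i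
  define opn where "opn G i = w i * norm (F i) * norm (G i)" for G :: "nat \<Rightarrow> 'a^'n" and i
  define apn where "apn G i = (w i * norm (F i) * norm (G i) + w i * norm (hip (G i) (F i))) / 2"
    for G :: "nat \<Rightarrow> 'a^'n" and i
  have OPe: "OP1 N p F G = Max (opn G ` {1..N})" for G
    unfolding OP1_eq opn_def w_def ..
  have APe: "AP1 N p F G = Max (apn G ` {1..N})" for G
    unfolding AP1_eq apn_def w_def ..
  have fin: "finite {1..N}" and ne: "{1..N} \<noteq> {}" using N1 by auto
  have w0: "w i \<ge> 0" for i unfolding w_def by simp
  have AP_le_OP: "AP1 N p F G \<le> OP1 N p F G" for G
    unfolding APe OPe
  proof (rule Max_img_mono[OF fin ne])
    fix i
    have "norm (hip (G i) (F i)) \<le> norm (F i) * norm (G i)"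
      using norm_hip_le[of "G i" "F i"] by (simp add: mult.commute)
    then have "w i * norm (hip (G i) (F i)) \<le> w i * (norm (F i) * norm (G i))"
      using w0 by (simp add: mult_left_mono)
    then show "apn G i \<le> opn G i" unfolding apn_def opn_def by (simp add: mult.assoc)
  qed
  have nhc: "norm (hip (c i) (F i)) = norm (F i) * norm (c i)" for i
    using A by (simp add: ce hip_scaleR_left norm_hip_self power2_eq_square)
  have AP_c: "AP1 N p F c = OP1 N p F c"
    unfolding APe OPe apn_def opn_def nhc by (simp add: mult.assoc)
  define M where "M = OP1 N p F c"
  have M0: "M \<ge> 0"
  proof -
    have "opn c 1 \<le> M" unfolding M_def OPe using N1 by (intro Max_img_ge[OF fin]) auto
    moreover have "opn c 1 \<ge> 0" unfolding opn_def using w0 by simp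
    ultimately show ?thesis by simp
  qed
  have cong: "OP1 N p F G = OP1 N p F G' \<and> AP1 N p F G = AP1 N p F G'"
    if "\<forall>i\<in>{1..N}. G i = G' i" for G G'
  proof -
    have "opn G ` {1..N} = opn G' ` {1..N}" "apn G ` {1..N} = apn G' ` {1..N}"
      using that unfolding opn_def apn_def by (auto intro!: image_cong)
    then show ?thesis unfolding OPe APe by simp
  qed
  have core: "\<exists>G'. is_dual N F G' \<and> OP1 N p F G' \<le> M \<and>
      ((\<forall>i\<in>{1..N}. G' i = c i) \<longrightarrow> (\<forall>i\<in>{1..N}. G i = c i))"
    if Gd: "is_dual N F G" and GA: "AP1 N p F G \<le> M" for G
  proof -
    define a where "a i = (norm (F i))^2 / A" for i
    define x where "x i = inner (G i) (F i)" for i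
    define P where "P i = norm (F i) * norm (G i)" for i
    define R where "R i = norm (hip (G i) (F i))" for i
    define K where "K i = (P i)^2 - 2 * a i * x i + (a i)^2" for i
    have ex: "\<exists>t0>0. \<forall>t. 0 < t \<and> t \<le> t0 \<longrightarrow> (w i)^2 * ((a i)^2 + 2*t*a i*(x i - a i) + t^2*K i) \<le> M^2"
      if i: "i \<in> {1..N}" for i
    proof (rule RL)
      show "w i \<ge> 0" by (rule w0)
      show "a i \<ge> 0" unfolding a_def using A by simp
      have "opn c i \<le> M" unfolding M_def OPe by (rule Max_img_ge[OF fin i])
      moreover have "opn c i = w i * a i" unfolding opn_def a_def ce using A
        by (simp add: power2_eq_square)
      ultimately show "w i * a i \<le> M" by simp
      have "apn G i \<le> AP1 N p F G" unfolding APe by (rule Max_img_ge[OF fin i])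
      then show "w i * (P i + R i) / 2 \<le> M" using GA unfolding apn_def P_def R_def
        by (simp add: algebra_simps)
      show "x i \<le> R i" unfolding x_def R_def inner_hip
        by (metis complex_Re_le_cmod norm_to_cplx)
      show "R i \<le> P i" unfolding R_def P_def using norm_hip_le[of "G i" "F i"] by (simp add: mult.commute)
      show "R i \<ge> 0" unfolding R_def by simp
      show "K i = (P i)^2 - 2 * a i * x i + (a i)^2" by (rule K_def)
    qed
    then obtain T where T: "\<forall>i\<in>{1..N}. T i > 0 \<and> (\<forall>t. 0 < t \<and> t \<le> T i \<longrightarrow>
        (w i)^2 * ((a i)^2 + 2*t*a i*(x i - a i) + t^2*K i) \<le> M^2)"
      by metis
    define t where "t = Min (T ` {1..N})"
    have t0: "t > 0" unfolding t_def using fin ne T by (simp add: Min_gr_iff)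
    have tT: "t \<le> T i" if "i \<in> {1..N}" for i unfolding t_def using fin that by simp
    define G' where "G' i = (1 - t) *\<^sub>R c i + t *\<^sub>R G i" for i
    have rc: "\<forall>f. f = (\<Sum>i=1..N. hip f (F i) *s G' i) \<and> f = (\<Sum>i=1..N. hip f (G' i) *s F i)"
      unfolding G'_def
      by (rule recon_comb) (use cd Gd in \<open>auto simp: is_dual_def\<close>)
    have G'd: "is_dual N F G'"
      unfolding is_dual_def using rc frame_of_recon[where N=N and G=G' and F=F] by blast
    have opnle: "opn G' i \<le> M" if i: "i \<in> {1..N}" for i
    proof -
      have "(norm (F i))^2 * (norm (G' i))^2 = (a i)^2 + 2*t*a i*(x i - a i) + t^2*K i"
        unfolding G'_def ce a_def x_def K_def P_def by (rule norm_id[OF A])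
      then have "(opn G' i)^2 = (w i)^2 * ((a i)^2 + 2*t*a i*(x i - a i) + t^2*K i)"
        unfolding opn_def by (simp add: power_mult_distrib mult.assoc)
      also have "\<dots> \<le> M^2" using T i t0 tT[OF i] by blast
      finally show ?thesis using M0 by (rule power2_le_imp_le)
    qed
    have "OP1 N p F G' \<le> M" unfolding OPe by (rule Max_img_le[OF fin ne opnle])
    moreover have "G i = c i" if "G' i = c i" for i
    proof -
      have "G' i - c i = t *\<^sub>R (G i - c i)" unfolding G'_def by (simp add: algebra_simps)
      then show ?thesis using that t0 by simp
    qed
    ultimately show ?thesis using G'd by blast
  qed
  show ?thesis
  proof
    assume L: "is_POD1 N p F (canon_dual N F) \<and>
              (\<forall>G. is_POD1 N p F G \<longrightarrow> (\<forall>i\<in>{1..N}. G i = canon_dual N F i))"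
    then have Lc: "\<forall>G. is_dual N F G \<longrightarrow> M \<le> OP1 N p F G"
      and Lu: "\<forall>G. is_POD1 N p F G \<longrightarrow> (\<forall>i\<in>{1..N}. G i = c i)"
      unfolding is_POD1_def M_def c_def by auto
    have uniq: "\<forall>i\<in>{1..N}. G i = c i" if Gd: "is_dual N F G" and GA: "AP1 N p F G \<le> M" for G
    proof -
      obtain G' where G': "is_dual N F G'" "OP1 N p F G' \<le> M"
        "(\<forall>i\<in>{1..N}. G' i = c i) \<longrightarrow> (\<forall>i\<in>{1..N}. G i = c i)"
        using core[OF Gd GA] by blast
      have "is_POD1 N p F G'" unfolding is_POD1_def using G' Lc by (meson order_trans)
      then show ?thesis using Lu G' by blast
    qed
    have Q1: "is_PASOD1 N p F c"
      unfolding is_PASOD1_def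
    proof (intro conjI allI impI)
      show "is_dual N F c" by (rule cd)
      fix G assume Gd: "is_dual N F G"
      show "AP1 N p F c \<le> AP1 N p F G"
      proof (rule ccontr)
        assume "\<not> AP1 N p F c \<le> AP1 N p F G"
        then have lt: "AP1 N p F G < M" using AP_c M_def by simp
        then have "\<forall>i\<in>{1..N}. G i = c i" using uniq[OF Gd] by simp
        then have "AP1 N p F G = AP1 N p F c" using cong by blast
        then show False using lt AP_c M_def by simp
      qed
    qed
    have Q2: "\<forall>i\<in>{1..N}. G i = c i" if "is_PASOD1 N p F G" for G
    proof -
      have "is_dual N F G" "AP1 N p F G \<le> AP1 N p F c" using that cd unfolding is_PASOD1_def by auto
      then show ?thesis using uniq AP_c M_def by simp
    qed
    show "is_PASOD1 N p F (canon_dual N F) \<and>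
              (\<forall>G. is_PASOD1 N p F G \<longrightarrow> (\<forall>i\<in>{1..N}. G i = canon_dual N F i))"
      using Q1 Q2 unfolding c_def by blast
  next
    assume R: "is_PASOD1 N p F (canon_dual N F) \<and>
              (\<forall>G. is_PASOD1 N p F G \<longrightarrow> (\<forall>i\<in>{1..N}. G i = canon_dual N F i))"
    then have Rc: "\<forall>G. is_dual N F G \<longrightarrow> AP1 N p F c \<le> AP1 N p F G"
      and Ru: "\<forall>G. is_PASOD1 N p F G \<longrightarrow> (\<forall>i\<in>{1..N}. G i = c i)"
      unfolding is_PASOD1_def c_def by auto
    have P1: "is_POD1 N p F c"
      unfolding is_POD1_def
    proof (intro conjI allI impI)
      show "is_dual N F c" by (rule cd)
      fix G assume Gd: "is_dual N F G"
      show "OP1 N p F c \<le> OP1 N p F G"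
        using Rc Gd AP_le_OP[of G] AP_c by (metis order_trans)
    qed
    have P2: "\<forall>i\<in>{1..N}. G i = c i" if G: "is_POD1 N p F G" for G
    proof -
      have Gd: "is_dual N F G" and GO: "OP1 N p F G \<le> OP1 N p F c"
        using G cd unfolding is_POD1_def by auto
      have "AP1 N p F G \<le> AP1 N p F G'" if "is_dual N F G'" for G'
        using AP_le_OP[of G] GO AP_c Rc that by (metis order_trans)
      then have "is_PASOD1 N p F G" unfolding is_PASOD1_def using Gd by blast
      then show ?thesis using Ru by blast
    qed
    show "is_POD1 N p F (canon_dual N F) \<and>
              (\<forall>G. is_POD1 N p F G \<longrightarrow> (\<forall>i\<in>{1..N}. G i = canon_dual N F i))"
      using P1 P2 unfolding c_def by blast
  qed
qed

theorem theorem3p6: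
  shows "(\<forall>(F :: nat \<Rightarrow> real^'n) (N::nat) (p :: nat \<Rightarrow> real).
            tight_frame N F \<and> prob_seq N p \<longrightarrow>
            ((is_POD1 N p F (canon_dual N F) \<and>
              (\<forall>G. is_POD1 N p F G \<longrightarrow> (\<forall>i\<in>{1..N}. G i = canon_dual N F i)))
             \<longleftrightarrow>
             (is_PASOD1 N p F (canon_dual N F) \<and>
              (\<forall>G. is_PASOD1 N p F G \<longrightarrow> (\<forall>i\<in>{1..N}. G i = canon_dual N F i)))))
       \<and>
         (\<forall>(F :: nat \<Rightarrow> complex^'m) (N::nat) (p :: nat \<Rightarrow> real).
            tight_frame N F \<and> prob_seq N p \<longrightarrow>
            ((is_POD1 N p F (canon_dual N F) \<and>
              (\<forall>G. is_POD1 N p F G \<longrightarrow> (\<forall>i\<in>{1..N}. G i = canon_dual N F i)))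
             \<longleftrightarrow>
             (is_PASOD1 N p F (canon_dual N F) \<and>
              (\<forall>G. is_PASOD1 N p F G \<longrightarrow> (\<forall>i\<in>{1..N}. G i = canon_dual N F i)))))"
  by (intro conjI allI impI; erule conjE; rule main_generic; assumption)

end
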